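(* Assume the standing assumptions below, and let $\{u^{(k)}\}_{k\ge0}$ be a $\Delta$-sequence in $\mathbf w$. Then the sequences of signed left stretches $\{\sigma^{(k)}\}_{k\ge1}$ and of signed right stretches $\{\rho^{(k)}\}_{k\ge1}$ are ultimately periodic.
   Context: Standing assumptions: $\Sigma$ is a finite alphabet; $h:\Sigma^*\to\Sigma^*$ is a nonerasing morphism prolongable on $w_0$ and $\mathbf w=w_0w_1w_2\cdots=h^\omega(w_0)$ is aperiodic; $h$ satisfies $\mathrm{alph}(h^n(a))=\mathrm{alph}(h(a))$ for all $a\in\Sigma$, $n\ge1$ ($\mathrm{alph}(w)$ = set of letters of $w$); $M=\max\{|h(a)|:a\in\Sigma\}$; $\Delta\subsetneq\Sigma$ is nonempty and $\overline\Delta=\Sigma\setminus\Delta$. Positions are indexed from $0$. A factor $w_i\cdots w_j$ is a $\Delta$-block if all its letters lie in $\Delta$; it is maximal if moreover $w_{j+1}\in\overline\Delta$ and either $i=0$ or $w_{i-1}\in\overline\Delta$. Occurrences are factors with their position intervals; $u'\prec u$ means the interval of $u'$ is contained in that of $u$. Since $\mathbf w=h(w_0)h(w_1)\cdots$, $h(w_p\cdots w_q)$ denotes the occurrence occupying the positions of the blocks $h(w_p),\dots,h(w_q)$ in this factorization. A $\Delta$-sequence is a sequence $u^{(k)}=w_{i_k}\cdots w_{j_k}$ ($k\ge0$) of maximal $\Delta$-blocks with $i_k>M$, $|u^{(k)}|>M^2$, and $h(w_{i_k+M}\cdots w_{j_k-M})\prec u^{(k+1)}\prec h(w_{i_k-M+1}\cdots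 w_{j_k+M-1})$ for all $k$. Stretches: for $k\ge0$ let the block $h(w_{i_k})$ occupy positions $r_{k+1},\dots,s_{k+1}$ and $h(w_{j_k})$ occupy positions $m_{k+1},\dots,n_{k+1}$. The left stretch $\sigma^{(k+1)}$ is: the positive word $w_{i_{k+1}}\cdots w_{r_{k+1}-1}$ if $i_{k+1}<r_{k+1}$; the negative word $w_{r_{k+1}}\cdots w_{i_{k+1}-1}$ if $i_{k+1}>r_{k+1}$; and $\epsilon$ if $i_{k+1}=r_{k+1}$. The right stretch $\rho^{(k+1)}$ is: the positive word $w_{n_{k+1}+1}\cdots w_{j_{k+1}}$ if $j_{k+1}>n_{k+1}$; the negative word $w_{j_{k+1}+1}\cdots w_{n_{k+1}}$ if $j_{k+1}<n_{k+1}$; and $\epsilon$ if $j_{k+1}=n_{k+1}$. Stretches are regarded as pairs (word, sign). *)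

theory Defs
  imports Main
begin

definition hom :: "('a \<Rightarrow> 'a list) \<Rightarrow> 'a list \<Rightarrow> 'a list" where
  "hom h xs = concat (map h xs)"

definition nonerasing :: "('a \<Rightarrow> 'a list) \<Rightarrow> bool" where
  "nonerasing h \<longleftrightarrow> (\<forall>a. h a \<noteq> [])"

definition prolongable :: "('a \<Rightarrow> 'a list) \<Rightarrow> 'a \<Rightarrow> bool" where
  "prolongable h a \<longleftrightarrow> (\<exists>x. x \<noteq> [] \<and> h a = a # x)"

text \<open>The fixed point h^omega(a): letter i is letter i of h^(i+1)(a)
  (which has length at least i+2 when h is nonerasing and prolongable on a).\<close>
definition omega_word :: "('a \<Rightarrow> 'a list) \<Rightarrow> 'a \<Rightarrow> nat \<Rightarrow> 'a" where
  "omega_word h a i = ((hom h ^^ Suc i) [a]) ! i"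

definition ultimately_periodic :: "(nat \<Rightarrow> 'b) \<Rightarrow> bool" where
  "ultimately_periodic f \<longleftrightarrow> (\<exists>p>0. \<exists>N. \<forall>n\<ge>N. f (n + p) = f n)"

definition max_len :: "('a::finite \<Rightarrow> 'a list) \<Rightarrow> nat" where
  "max_len h = Max (range (\<lambda>a. length (h a)))"

text \<open>Starting position of the block h(w_p) in w = h(w_0) h(w_1) ...\<close>
definition hpos :: "('a \<Rightarrow> 'a list) \<Rightarrow> (nat \<Rightarrow> 'a) \<Rightarrow> nat \<Rightarrow> nat" where
  "hpos h w p = length (hom h (map w [0..<p]))"

definition max_block :: "'a set \<Rightarrow> (nat \<Rightarrow> 'a) \<Rightarrow> nat \<Rightarrow> nat \<Rightarrow> bool" where
  "max_block D w i j \<longleftrightarrow> i \<le> j \<and> (\<forall>p\<in>{i..j}. w p \<in> D) \<and> w (Suc j) \<notin> D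
      \<and> (i = 0 \<or> w (i - 1) \<notin> D)"

definition occ_le :: "nat \<times> nat \<Rightarrow> nat \<times> nat \<Rightarrow> bool" where
  "occ_le u v \<longleftrightarrow> fst v \<le> fst u \<and> snd u \<le> snd v"

text \<open>Delta-sequence given by start positions i k and end positions j k.
  h(w_p ... w_q) occupies positions hpos p .. hpos (q+1) - 1.\<close>
definition delta_sequence ::
  "('a::finite \<Rightarrow> 'a list) \<Rightarrow> (nat \<Rightarrow> 'a) \<Rightarrow> 'a set \<Rightarrow> (nat \<Rightarrow> nat) \<Rightarrow> (nat \<Rightarrow> nat) \<Rightarrow> bool" where
  "delta_sequence h w D i j \<longleftrightarrow> (let M = max_len h in
     \<forall>k. max_block D w (i k) (j k) \<and> i k > M \<and> j k - i k + 1 > M^2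
       \<and> occ_le (hpos h w (i k + M), hpos h w (j k - M + 1) - 1) (i (Suc k), j (Suc k))
       \<and> occ_le (i (Suc k), j (Suc k)) (hpos h w (i k - M + 1), hpos h w (j k + M) - 1))"

datatype 'a stretch = Pos "'a list" | Neg "'a list" | Eps

text \<open>Left stretch sigma^(k+1), from i_k (ik) and i_{k+1} (ik'); r_{k+1} = hpos ik.\<close>
definition left_stretch :: "('a \<Rightarrow> 'a list) \<Rightarrow> (nat \<Rightarrow> 'a) \<Rightarrow> nat \<Rightarrow> nat \<Rightarrow> 'a stretch" where
  "left_stretch h w ik ik' = (let r = hpos h w ik in
     if ik' < r then Pos (map w [ik'..<r])
     else if ik' > r then Neg (map w [r..<ik'])
     else Eps)"

text \<open>Right stretch rho^(k+1), from j_k (jk) and j_{k+1} (jk'); n_{k+1} = hpos (jk+1) - 1.\<close>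
definition right_stretch :: "('a \<Rightarrow> 'a list) \<Rightarrow> (nat \<Rightarrow> 'a) \<Rightarrow> nat \<Rightarrow> nat \<Rightarrow> 'a stretch" where
  "right_stretch h w jk jk' = (let n = hpos h w (Suc jk) - 1 in
     if jk' > n then Pos (map w [Suc n..<Suc jk'])
     else if jk' < n then Neg (map w [Suc jk'..<Suc n])
     else Eps)"

end

theory Submission
  imports Defs
begin


lemma hom_append[simp]: "hom h (xs @ ys) = hom h xs @ hom h ys"
  by (simp add: hom_def)
lemma hom_single[simp]: "hom h [a] = h a"
  by (simp add: hom_def)
lemma hom_Nil[simp]: "hom h [] = []"
  by (simp add: hom_def)
lemma hom_Cons: "hom h (a # xs) = h a @ hom h xs"
  by (simp add: hom_def)

lemma hom_len_ge: "nonerasing h \<Longrightarrow> length (hom h xs) \<ge> length xs"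
proof (induction xs)
  case (Cons a xs)
  then have "length (h a) \<ge> 1" unfolding nonerasing_def by (metis One_nat_def Suc_leI length_greater_0_conv)
  with Cons show ?case by (simp add: hom_Cons)
qed simp

lemma X_ext:
  assumes ne: "nonerasing h" and pr: "prolongable h w0"
  shows "\<exists>zs. (hom h ^^ Suc n) [w0] = (hom h ^^ n) [w0] @ zs"
proof (induction n)
  case 0
  from pr obtain x where "h w0 = w0 # x" unfolding prolongable_def by blast
  then show ?case by simp
next
  case (Suc n)
  then obtain zs where "(hom h ^^ Suc n) [w0] = (hom h ^^ n) [w0] @ zs" by blast
  then have "(hom h ^^ Suc (Suc n)) [w0] = (hom h ^^ Suc n) [w0] @ hom h zs"
    by simp
  then show ?case by blast
qed

lemma X_ext_le:
  assumes ne: "nonerasing h" and pr: "prolongable h w0" and "n \<le> m"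
  shows "\<exists>zs. (hom h ^^ m) [w0] = (hom h ^^ n) [w0] @ zs"
  using assms(3)
proof (induction m rule: dec_induct)
  case base then show ?case by auto
next
  case (step m)
  then obtain zs where z: "(hom h ^^ m) [w0] = (hom h ^^ n) [w0] @ zs" by blast
  from X_ext[OF ne pr, of m] obtain ys where "(hom h ^^ Suc m) [w0] = (hom h ^^ m) [w0] @ ys" by blast
  with z show ?case by auto
qed

lemma X_len:
  assumes ne: "nonerasing h" and pr: "prolongable h w0"
  shows "length ((hom h ^^ n) [w0]) \<ge> Suc n \<and> hd ((hom h ^^ n) [w0]) = w0 \<and> (hom h ^^ n) [w0] \<noteq> []"
proof (induction n)
  case 0 then show ?case by simp
next
  case (Suc n)
  from pr obtain x where x: "x \<noteq> []" "h w0 = w0 # x" unfolding prolongable_def by blast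
  from Suc obtain rest where r: "(hom h ^^ n) [w0] = w0 # rest"
    by (metis list.collapse)
  have "(hom h ^^ Suc n) [w0] = w0 # x @ hom h rest" using r x by (simp add: hom_Cons)
  moreover have "length (hom h rest) \<ge> length rest" using hom_len_ge[OF ne] .
  moreover have "length x \<ge> 1" using x by (cases x) auto
  ultimately show ?case using Suc r by auto
qed

lemma w_nth:
  assumes ne: "nonerasing h" and pr: "prolongable h w0" and "i < length ((hom h ^^ n) [w0])"
  shows "omega_word h w0 i = (hom h ^^ n) [w0] ! i"
proof -
  have l1: "i < length ((hom h ^^ Suc i) [w0])" using X_len[OF ne pr, of "Suc i"] by simp
  let ?m = "max n (Suc i)"
  obtain z1 where z1: "(hom h ^^ ?m) [w0] = (hom h ^^ n) [w0] @ z1" using X_ext_le[OF ne pr, of n ?m] by auto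
  obtain z2 where z2: "(hom h ^^ ?m) [w0] = (hom h ^^ Suc i) [w0] @ z2" using X_ext_le[OF ne pr, of "Suc i" ?m] by auto
  have "(hom h ^^ ?m) [w0] ! i = (hom h ^^ n) [w0] ! i" using z1 assms(3) by (simp add: nth_append)
  moreover have "(hom h ^^ ?m) [w0] ! i = (hom h ^^ Suc i) [w0] ! i" using z2 l1 by (simp add: nth_append)
  ultimately show ?thesis unfolding omega_word_def by simp
qed

lemma fixpoint:
  assumes ne: "nonerasing h" and pr: "prolongable h w0" and t: "t < length (h (omega_word h w0 p))"
  shows "omega_word h w0 (hpos h (omega_word h w0) p + t) = h (omega_word h w0 p) ! t"
proof -
  let ?w = "omega_word h w0"
  let ?X = "(hom h ^^ Suc p) [w0]"
  have lX: "Suc p \<le> length ?X" using X_len[OF ne pr, of "Suc p"] by simp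
  have mp: "map ?w [0..<Suc p] = take (Suc p) ?X"
  proof (rule nth_equalityI)
    show "length (map ?w [0..<Suc p]) = length (take (Suc p) ?X)" using lX by simp
    fix k assume "k < length (map ?w [0..<Suc p])"
    then have k: "k < Suc p" by simp
    have "?w k = ?X ! k" using w_nth[OF ne pr, of k "Suc p"] k lX by linarith
    then show "map ?w [0..<Suc p] ! k = take (Suc p) ?X ! k"
      using k by (simp del: upt_Suc funpow.simps)
  qed
  have "?X = take (Suc p) ?X @ drop (Suc p) ?X" by simp
  then have "hom h ?X = hom h (map ?w [0..<p]) @ h (?w p) @ hom h (drop (Suc p) ?X)"
    using mp by (metis append_assoc hom_append hom_single list.simps(8,9) map_append upt_Suc_append zero_le)
  then have eq: "(hom h ^^ Suc (Suc p)) [w0] = hom h (map ?w [0..<p]) @ h (?w p) @ hom h (drop (Suc p) ?X)"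
    by simp
  have "hpos h ?w p + t < length ((hom h ^^ Suc (Suc p)) [w0])"
    unfolding eq hpos_def using t by simp
  then have "?w (hpos h ?w p + t) = (hom h ^^ Suc (Suc p)) [w0] ! (hpos h ?w p + t)"
    by (rule w_nth[OF ne pr])
  also have "\<dots> = h (?w p) ! t" unfolding eq hpos_def using t by (simp add: nth_append)
  finally show ?thesis .
qed




locale fp =
  fixes h :: "'a \<Rightarrow> 'a list" and w :: "nat \<Rightarrow> 'a" and D :: "'a set" and M :: nat
  assumes ne: "\<And>a. h a \<noteq> []"
    and fp: "\<And>p t. t < length (h (w p)) \<Longrightarrow> w (hpos h w p + t) = h (w p) ! t"
    and Mb: "\<And>a. length (h a) \<le> M"
    and alph: "\<And>a. set (hom h (h a)) = set (h a)"
begin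

abbreviation "hp \<equiv> hpos h w"

lemma len_pos: "length (h a) \<ge> 1"
  using ne[of a] by (cases "h a") auto

lemma M1: "M \<ge> 1" using len_pos Mb le_trans by blast

lemma hp_Suc: "hp (Suc p) = hp p + length (h (w p))"
  by (simp add: hpos_def)

lemma hp_0[simp]: "hp 0 = 0" by (simp add: hpos_def)

lemma hp_Suc_le: "hp (Suc p) \<le> hp p + M"
  using hp_Suc Mb by (metis add_le_cancel_left)

lemma hp_strict: "p < q \<Longrightarrow> hp p < hp q"
proof (induction q)
  case (Suc q)
  then show ?case using hp_Suc[of q] len_pos[of "w q"] by (cases "p = q") auto
qed simp

lemma hp_mono: "p \<le> q \<Longrightarrow> hp p \<le> hp q"
  using hp_strict by (cases "p = q") (auto intro: less_imp_le)

lemma hp_ge: "p \<le> hp p"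
proof (induction p)
  case (Suc p) then show ?case using hp_Suc[of p] len_pos[of "w p"] by simp
qed simp

lemma hp_add: "hp (p + k) \<le> hp p + k * M"
proof (induction k)
  case (Suc k) then show ?case using hp_Suc_le[of "p + k"] by simp
qed simp

lemma block: "\<exists>Q t. n = hp Q + t \<and> t < length (h (w Q))"
proof -
  have ex: "\<exists>Q. n < hp (Suc Q)" using hp_ge[of "Suc n"] by (intro exI[of _ n]) simp
  define Q where "Q = (LEAST Q. n < hp (Suc Q))"
  have n1: "n < hp (Suc Q)" unfolding Q_def by (rule LeastI_ex[OF ex])
  have n2: "hp Q \<le> n"
  proof (cases Q)
    case 0 then show ?thesis by simp
  next
    case (Suc Q0)
    have "\<not> n < hp (Suc Q0)"
    proof
      assume "n < hp (Suc Q0)"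
      then have "Q \<le> Q0" unfolding Q_def by (rule Least_le)
      with Suc show False by simp
    qed
    then show ?thesis using Suc by simp
  qed
  show ?thesis
    by (rule exI[of _ Q], rule exI[of _ "n - hp Q"]) (use n1 n2 hp_Suc[of Q] in auto)
qed

lemma hp_seg: "hp (A + s) = hp A + length (hom h (map w [A..<A+s]))"
  unfolding hpos_def using upt_add_eq_append[of 0 A s] by simp

lemma w_seg: "t < length (hom h (map w [A..<A+s])) \<Longrightarrow> w (hp A + t) = hom h (map w [A..<A+s]) ! t"
proof (induction s arbitrary: t)
  case 0 then show ?case by simp
next
  case (Suc s)
  let ?hs = "hom h (map w [A..<A+s])"
  have eq: "hom h (map w [A..<A+Suc s]) = ?hs @ h (w (A+s))" by simp
  show ?case
  proof (cases "t < length ?hs")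
    case True then show ?thesis using Suc.IH eq by (simp add: nth_append)
  next
    case False
    define t' where "t' = t - length ?hs"
    have t': "t = length ?hs + t'" "t' < length (h (w (A+s)))" using False Suc.prems eq t'_def by auto
    have "w (hp A + t) = w (hp (A+s) + t')" using hp_seg[of A s] t' by (simp add: add.assoc)
    also have "\<dots> = h (w (A+s)) ! t'" using fp t' by blast
    finally show ?thesis using eq t' by (simp add: nth_append)
  qed
qed

lemma seg_block: "s \<le> length (h (w P)) \<Longrightarrow> map w [hp P..<hp P + s] = take s (h (w P))"
proof (rule nth_equalityI)
  fix k assume s: "s \<le> length (h (w P))" and k: "k < length (map w [hp P..<hp P + s])"
  then have "k < s" by simp
  then show "map w [hp P..<hp P + s] ! k = take s (h (w P)) ! k"
    using fp[of k P] s by simp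
qed simp

lemma hp_in_block: "s \<le> length (h (w P)) \<Longrightarrow> hp (hp P + s) = hp (hp P) + length (hom h (take s (h (w P))))"
  using hp_seg[of "hp P" s] seg_block by simp

lemma w_block2: "t < length (hom h (h (w P))) \<Longrightarrow> w (hp (hp P) + t) = hom h (h (w P)) ! t"
  using w_seg[of t "hp P" "length (h (w P))"] seg_block[of "length (h (w P))" P] by simp

lemma map_block2: "v \<le> length (hom h (h (w P))) \<Longrightarrow>
   map w [hp (hp P) + u..<hp (hp P) + v] = map ((!) (hom h (h (w P)))) [u..<v]"
proof (rule nth_equalityI)
  fix k assume v: "v \<le> length (hom h (h (w P)))" and k: "k < length (map w [hp (hp P) + u..<hp (hp P) + v])"
  then have "u + k < v" by simp
  then show "map w [hp (hp P) + u..<hp (hp P) + v] ! k = map ((!) (hom h (h (w P)))) [u..<v] ! k"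
    using w_block2[of "u+k" P] v by (simp add: add.assoc)
qed simp

definition "E = {a. \<exists>c\<in>set (h a). c \<notin> D}"

lemma set_hom: "set (hom h xs) = (\<Union>b\<in>set xs. set (h b))"
  by (simp add: hom_def)

lemma F1: "a \<notin> E \<Longrightarrow> b \<in> set (h a) \<Longrightarrow> b \<notin> E"
  using alph[of a] unfolding E_def set_hom by blast

lemma F2: "a \<in> E \<Longrightarrow> \<exists>b\<in>set (h a). b \<in> E"
  using alph[of a] unfolding E_def set_hom by blast

definition "lam a = Max {t. t < length (h a) \<and> h a ! t \<notin> D}"
definition "eps a = Max {t. t < length (h a) \<and> h a ! t \<in> E}"
definition "mu a = Min {t. t < length (h a) \<and> h a ! t \<notin> D}"
definition "eps' a = Min {t. t < length (h a) \<and> h a ! t \<in> E}"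

lemma lam_prop: "a \<in> E \<Longrightarrow> lam a < length (h a) \<and> h a ! lam a \<notin> D"
proof -
  assume "a \<in> E"
  then have ne: "{t. t < length (h a) \<and> h a ! t \<notin> D} \<noteq> {}" unfolding E_def by (auto simp: in_set_conv_nth)
  show ?thesis using Max_in[OF _ ne] unfolding lam_def by auto
qed

lemma lam_eq: "t < length (h a) \<Longrightarrow> h a ! t \<notin> D \<Longrightarrow> (\<And>t'. t < t' \<Longrightarrow> t' < length (h a) \<Longrightarrow> h a ! t' \<in> D) \<Longrightarrow> lam a = t"
  unfolding lam_def by (rule Max_eqI) (auto, metis not_le_imp_less)

lemma eps_prop: "a \<in> E \<Longrightarrow> eps a < length (h a) \<and> h a ! eps a \<in> E"
proof -
  assume "a \<in> E"
  then have ne: "{t. t < length (h a) \<and> h a ! t \<in> E} \<noteq> {}" using F2[of a] by (force simp: in_set_conv_nth)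
  show ?thesis using Max_in[OF _ ne] unfolding eps_def by auto
qed

lemma eps_max: "t < length (h a) \<Longrightarrow> h a ! t \<in> E \<Longrightarrow> t \<le> eps a"
  unfolding eps_def by (rule Max_ge) auto

lemma mu_prop: "a \<in> E \<Longrightarrow> mu a < length (h a) \<and> h a ! mu a \<notin> D"
proof -
  assume "a \<in> E"
  then have ne: "{t. t < length (h a) \<and> h a ! t \<notin> D} \<noteq> {}" unfolding E_def by (auto simp: in_set_conv_nth)
  show ?thesis using Min_in[OF _ ne] unfolding mu_def by auto
qed

lemma mu_eq: "t < length (h a) \<Longrightarrow> h a ! t \<notin> D \<Longrightarrow> (\<And>t'. t' < t \<Longrightarrow> h a ! t' \<in> D) \<Longrightarrow> mu a = t"
  unfolding mu_def by (rule Min_eqI) (auto, metis not_le_imp_less)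

lemma eps'_prop: "a \<in> E \<Longrightarrow> eps' a < length (h a) \<and> h a ! eps' a \<in> E"
proof -
  assume "a \<in> E"
  then have ne: "{t. t < length (h a) \<and> h a ! t \<in> E} \<noteq> {}" using F2[of a] by (force simp: in_set_conv_nth)
  show ?thesis using Min_in[OF _ ne] unfolding eps'_def by auto
qed

lemma eps'_min: "t < length (h a) \<Longrightarrow> h a ! t \<in> E \<Longrightarrow> eps' a \<le> t"
  unfolding eps'_def by (rule Min_le) auto

lemma blockE: "w (hp Q + t) \<in> E \<Longrightarrow> t < length (h (w Q)) \<Longrightarrow> w Q \<in> E"
  using F1 fp by (metis nth_mem)

lemma blockD: "w (hp Q + t) \<notin> D \<Longrightarrow> t < length (h (w Q)) \<Longrightarrow> w Q \<in> E"
  using fp unfolding E_def by (metis (mono_tags, lifting) mem_Collect_eq nth_mem)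

end




lemma sq_ineq: "2 * (M::nat) \<le> M * M + 1"
proof (cases M)
  case (Suc m) then show ?thesis by (simp add: algebra_simps)
qed simp

locale runs = fp h w D M for h :: "'a \<Rightarrow> 'a list" and w D M +
  fixes i j :: "nat \<Rightarrow> nat"
  assumes mb: "\<And>k. max_block D w (i k) (j k)"
    and Mi: "\<And>k. M < i k"
    and len: "\<And>k. M * M < j k - i k + 1"
    and c1: "\<And>k. i (Suc k) \<le> hpos h w (i k + M)"
    and c2: "\<And>k. hpos h w (j k - M + 1) - 1 \<le> j (Suc k)"
begin

definition "lastE X q \<longleftrightarrow> q < X \<and> w q \<in> E \<and> (\<forall>r. q < r \<and> r < X \<longrightarrow> w r \<notin> E)"
definition "firstE X q \<longleftrightarrow> X \<le> q \<and> w q \<in> E \<and> (\<forall>r. X \<le> r \<and> r < q \<longrightarrow> w r \<notin> E)"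

lemma ij: "i k \<le> j k" using mb[of k] unfolding max_block_def by simp
lemma runD: "i k \<le> p \<Longrightarrow> p \<le> j k \<Longrightarrow> w p \<in> D" using mb[of k] unfolding max_block_def by auto
lemma ipos: "i k \<ge> 1" using Mi[of k] M1 by linarith
lemma prevnD: "w (i k - 1) \<notin> D" using mb[of k] ipos[of k] unfolding max_block_def by auto
lemma nextnD: "w (Suc (j k)) \<notin> D" using mb[of k] unfolding max_block_def by auto
lemma lenk: "i k + M * M \<le> j k" using len[of k] ij[of k] by linarith
lemma lenk2: "i k + 2 * M \<le> j k + 1" using lenk[of k] sq_ineq[of M] by linarith
lemma jM: "M \<le> j k" using lenk2[of k] Mi[of k] by linarith
lemma c2': "hp (j k - M + 1) \<le> Suc (j (Suc k))" using c2[of k] by linarith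
lemma up: "hp (i k + M) \<le> Suc (j (Suc k))"
proof -
  have "i k + M \<le> j k - M + 1" using lenk2[of k] jM[of k] by linarith
  then have "hp (i k + M) \<le> hp (j k - M + 1)" by (rule hp_mono)
  with c2'[of k] show ?thesis by linarith
qed
lemma low: "i (Suc k) \<le> hp (j k - M + 1)"
proof -
  have "i k + M \<le> j k - M + 1" using lenk2[of k] jM[of k] by linarith
  then have "hp (i k + M) \<le> hp (j k - M + 1)" by (rule hp_mono)
  with c1[of k] show ?thesis by linarith
qed

lemma inD: "i (Suc k) \<le> p \<Longrightarrow> p < Suc (j (Suc k)) \<Longrightarrow> w p \<in> D"
  using runD[of "Suc k" p] by simp

lemma left_block: "\<exists>Q t. i (Suc k) - 1 = hp Q + t \<and> t < length (h (w Q)) \<and> w Q \<in> E \<and> Q < i k + M"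
proof -
  obtain Q t where Qt: "i (Suc k) - 1 = hp Q + t" "t < length (h (w Q))" using block by blast
  have QE: "w Q \<in> E" using blockD[of Q t] prevnD[of "Suc k"] Qt by simp
  have QI: "Q < i k + M"
  proof (rule ccontr)
    assume "\<not> Q < i k + M" then have "hp (i k + M) \<le> hp Q" by (simp add: hp_mono)
    with Qt c1[of k] ipos[of "Suc k"] show False by linarith
  qed
  show ?thesis using Qt QE QI by blast
qed

lemma left_a:
  assumes q: "lastE (i k + M) q"
  shows "i (Suc k) = hp q + lam (w q) + 1"
proof -
  obtain Q t where Qt: "i (Suc k) - 1 = hp Q + t" "t < length (h (w Q))" and QE: "w Q \<in> E" and QI: "Q < i k + M"
    using left_block by blast
  have Qq: "Q \<le> q" using q QE QI unfolding lastE_def by (metis not_le)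
  have qE: "w q \<in> E" and qI: "q < i k + M" using q unfolding lastE_def by auto
  have hq: "hp (Suc q) \<le> Suc (j (Suc k))"
    using hp_mono[of "Suc q" "i k + M"] qI up[of k] by linarith
  have Qeq: "Q = q"
  proof (rule ccontr)
    assume "Q \<noteq> q" then have "Q < q" using Qq by simp
    then have h1: "hp (Suc Q) \<le> hp q" using hp_mono by simp
    from lam_prop[OF qE] have l: "lam (w q) < length (h (w q))" "h (w q) ! lam (w q) \<notin> D" by auto
    have nd: "w (hp q + lam (w q)) \<notin> D" using fp[OF l(1)] l(2) by simp
    have "hp q + lam (w q) \<ge> i (Suc k)" using hp_Suc[of Q] h1 Qt ipos[of "Suc k"] by linarith
    moreover have "hp q + lam (w q) < Suc (j (Suc k))" using hp_Suc[of q] l(1) hq by linarith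
    ultimately show False using inD nd by blast
  qed
  have t: "t = lam (w q)"
  proof (rule lam_eq[symmetric])
    show "t < length (h (w q))" using Qt Qeq by simp
    show "h (w q) ! t \<notin> D" using fp[of t q] Qt Qeq prevnD[of "Suc k"] by simp
    fix t' assume t': "t < t'" "t' < length (h (w q))"
    have Qt': "i (Suc k) - 1 = hp q + t" using Qt Qeq by simp
    have a1: "i (Suc k) \<le> hp q + t'" using t' Qt' ipos[of "Suc k"] by linarith
    have a2: "hp q + t' < Suc (j (Suc k))" using t' hp_Suc[of q] hq by linarith
    have "w (hp q + t') \<in> D" using inD[OF a1 a2] .
    then show "h (w q) ! t' \<in> D" using fp[OF t'(2)] by simp
  qed
  have Qt': "i (Suc k) - 1 = hp q + t" using Qt Qeq by simp
  show ?thesis using Qt' t ipos[of "Suc k"] by linarith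
qed

lemma left_b:
  assumes q: "lastE (i k + M) q"
  shows "lastE (i (Suc k) + M) (hp q + eps (w q))"
proof -
  have qE: "w q \<in> E" and qI: "q < i k + M" using q unfolding lastE_def by auto
  have I': "i (Suc k) = hp q + lam (w q) + 1" using left_a[OF q] .
  from eps_prop[OF qE] have e: "eps (w q) < length (h (w q))" "h (w q) ! eps (w q) \<in> E" by auto
  have p0E: "w (hp q + eps (w q)) \<in> E" using fp[OF e(1)] e(2) by simp
  have p0lt: "hp q + eps (w q) < i (Suc k) + M" using e(1) Mb[of "w q"] I' by linarith
  have rest: "w r \<notin> E" if r: "hp q + eps (w q) < r" "r < i (Suc k) + M" for r
  proof
    assume rE: "w r \<in> E"
    obtain R t where Rt: "r = hp R + t" "t < length (h (w R))" using block by blast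
    have RE: "w R \<in> E" using blockE[of R t] rE Rt by simp
    consider "R = q" | "R < q" | "q < R" by linarith
    then show False
    proof cases
      case 1
      have "t \<le> eps (w q)" using eps_max[of t "w q"] Rt rE fp[of t R] 1 by simp
      moreover from 1 Rt have "r = hp q + t" by simp
      ultimately show False using r by linarith
    next
      case 2
      then have "hp (Suc R) \<le> hp q" using hp_mono by simp
      then show False using hp_Suc[of R] Rt r by linarith
    next
      case 3
      then have RI: "i k + M \<le> R" using q RE unfolding lastE_def by (metis not_le)
      from lam_prop[OF RE] have l: "lam (w R) < length (h (w R))" "h (w R) ! lam (w R) \<notin> D" by auto
      have nd: "w (hp R + lam (w R)) \<notin> D" using fp[OF l(1)] l(2) by simp
      have "hp (i k + M) \<le> hp R" using RI hp_mono by simp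
      then have "i (Suc k) \<le> hp R + lam (w R)" using c1[of k] by linarith
      then have "Suc (j (Suc k)) \<le> hp R + lam (w R)" using inD nd not_le by blast
      then show False using l(1) Mb[of "w R"] Rt r lenk2[of "Suc k"] by linarith
    qed
  qed
  show ?thesis unfolding lastE_def using p0E p0lt rest by blast
qed

lemma left_ex: "\<exists>q. lastE (i k + M) q"
proof -
  obtain Q where QE: "w Q \<in> E" and QI: "Q < i k + M" using left_block by blast
  let ?S = "{r. r < i k + M \<and> w r \<in> E}"
  have fin: "finite ?S" by simp
  have ne: "?S \<noteq> {}" using QE QI by blast
  have "Max ?S \<in> ?S" using Max_in[OF fin ne] .
  moreover have "\<forall>r. Max ?S < r \<and> r < i k + M \<longrightarrow> w r \<notin> E"
  proof (intro allI impI)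
    fix r assume r: "Max ?S < r \<and> r < i k + M"
    show "w r \<notin> E"
    proof
      assume "w r \<in> E" then have "r \<in> ?S" using r by simp
      then have "r \<le> Max ?S" by (rule Max_ge[OF fin])
      with r show False by simp
    qed
  qed
  ultimately show ?thesis unfolding lastE_def by blast
qed


lemma right_block: "\<exists>Q t. Suc (j (Suc k)) = hp Q + t \<and> t < length (h (w Q)) \<and> w Q \<in> E \<and> j k - M + 1 \<le> Q"
proof -
  obtain Q t where Qt: "Suc (j (Suc k)) = hp Q + t" "t < length (h (w Q))" using block by blast
  have QE: "w Q \<in> E" using blockD[of Q t] nextnD[of "Suc k"] Qt by simp
  have QI: "j k - M + 1 \<le> Q"
  proof (rule ccontr)
    assume "\<not> j k - M + 1 \<le> Q" then have "hp (Suc Q) \<le> hp (j k - M + 1)" by (simp add: hp_mono)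
    with Qt c2'[of k] hp_Suc[of Q] show False by linarith
  qed
  show ?thesis using Qt QE QI by blast
qed

lemma right_a:
  assumes q: "firstE (j k - M + 1) q"
  shows "Suc (j (Suc k)) = hp q + mu (w q)"
proof -
  obtain Q t where Qt: "Suc (j (Suc k)) = hp Q + t" "t < length (h (w Q))" and QE: "w Q \<in> E" and QI: "j k - M + 1 \<le> Q"
    using right_block by blast
  have Qq: "q \<le> Q" using q QE QI unfolding firstE_def by (metis not_le)
  have qE: "w q \<in> E" and qI: "j k - M + 1 \<le> q" using q unfolding firstE_def by auto
  have hq: "i (Suc k) \<le> hp q" using hp_mono[OF qI] low[of k] by linarith
  have Qeq: "Q = q"
  proof (rule ccontr)
    assume "Q \<noteq> q" then have "q < Q" using Qq by simp
    then have h1: "hp (Suc q) \<le> hp Q" using hp_mono by simp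
    from mu_prop[OF qE] have l: "mu (w q) < length (h (w q))" "h (w q) ! mu (w q) \<notin> D" by auto
    have nd: "w (hp q + mu (w q)) \<notin> D" using fp[OF l(1)] l(2) by simp
    have a1: "i (Suc k) \<le> hp q + mu (w q)" using hq by linarith
    have a2: "hp q + mu (w q) < Suc (j (Suc k))" using hp_Suc[of q] l(1) h1 Qt by linarith
    show False using inD[OF a1 a2] nd by blast
  qed
  have Qt': "Suc (j (Suc k)) = hp q + t" using Qt Qeq by simp
  have t: "t = mu (w q)"
  proof (rule mu_eq[symmetric])
    show "t < length (h (w q))" using Qt Qeq by simp
    show "h (w q) ! t \<notin> D" using fp[of t q] Qt Qeq nextnD[of "Suc k"] by simp
    fix t' assume t': "t' < t"
    have a1: "i (Suc k) \<le> hp q + t'" using hq by linarith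
    have a2: "hp q + t' < Suc (j (Suc k))" using t' Qt' by linarith
    have "w (hp q + t') \<in> D" using inD[OF a1 a2] .
    moreover have "t' < length (h (w q))" using t' Qt Qeq by simp
    ultimately show "h (w q) ! t' \<in> D" using fp by simp
  qed
  show ?thesis using Qt' t by simp
qed

lemma right_b:
  assumes q: "firstE (j k - M + 1) q"
  shows "firstE (j (Suc k) - M + 1) (hp q + eps' (w q))"
proof -
  have qE: "w q \<in> E" and qI: "j k - M + 1 \<le> q" using q unfolding firstE_def by auto
  have J': "Suc (j (Suc k)) = hp q + mu (w q)" using right_a[OF q] .
  from eps'_prop[OF qE] have e: "eps' (w q) < length (h (w q))" "h (w q) ! eps' (w q) \<in> E" by auto
  from mu_prop[OF qE] have m: "mu (w q) < length (h (w q))" by auto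
  have p0E: "w (hp q + eps' (w q)) \<in> E" using fp[OF e(1)] e(2) by simp
  have p0ge: "j (Suc k) - M + 1 \<le> hp q + eps' (w q)" using m Mb[of "w q"] J' jM[of "Suc k"] by linarith
  have rest: "w r \<notin> E" if r: "j (Suc k) - M + 1 \<le> r" "r < hp q + eps' (w q)" for r
  proof
    assume rE: "w r \<in> E"
    obtain R t where Rt: "r = hp R + t" "t < length (h (w R))" using block by blast
    have RE: "w R \<in> E" using blockE[of R t] rE Rt by simp
    consider "R = q" | "q < R" | "R < q" by linarith
    then show False
    proof cases
      case 1
      have "eps' (w q) \<le> t" using eps'_min[of t "w q"] Rt rE fp[of t R] 1 by simp
      moreover from 1 Rt have "r = hp q + t" by simp
      ultimately show False using r by linarith
    next
      case 2
      then have "hp (Suc q) \<le> hp R" using hp_mono by simp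
      then show False using hp_Suc[of q] Rt r e(1) by linarith
    next
      case 3
      then have RI: "R < j k - M + 1" using q RE unfolding firstE_def by (metis not_le)
      from lam_prop[OF RE] have l: "lam (w R) < length (h (w R))" "h (w R) ! lam (w R) \<notin> D" by auto
      have nd: "w (hp R + lam (w R)) \<notin> D" using fp[OF l(1)] l(2) by simp
      have "hp (Suc R) \<le> hp (j k - M + 1)" using RI hp_mono by simp
      then have a2: "hp R + lam (w R) < Suc (j (Suc k))" using c2'[of k] hp_Suc[of R] l(1) by linarith
      have "hp R + lam (w R) < i (Suc k)"
      proof (rule ccontr)
        assume "\<not> hp R + lam (w R) < i (Suc k)"
        then have "i (Suc k) \<le> hp R + lam (w R)" by simp
        from inD[OF this a2] nd show False by blast
      qed
      then show False using Mb[of "w R"] Rt r lenk2[of "Suc k"] by linarith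
    qed
  qed
  show ?thesis unfolding firstE_def using p0E p0ge rest by blast
qed

lemma right_ex: "\<exists>q. firstE (j k - M + 1) q"
proof -
  obtain Q where QE: "w Q \<in> E" and QI: "j k - M + 1 \<le> Q" using right_block by blast
  let ?S = "{r. j k - M + 1 \<le> r \<and> w r \<in> E}"
  have ne: "?S \<noteq> {}" using QE QI by blast
  define m where "m = (LEAST r. r \<in> ?S)"
  have "m \<in> ?S" unfolding m_def using ne by (metis LeastI_ex all_not_in_conv)
  moreover have "\<forall>r. j k - M + 1 \<le> r \<and> r < m \<longrightarrow> w r \<notin> E"
    unfolding m_def using not_less_Least by blast
  ultimately show ?thesis unfolding firstE_def by blast
qed

end



definition LS :: "'a list \<Rightarrow> nat \<Rightarrow> nat \<Rightarrow> 'a stretch" where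
  "LS hh u v = (if u < v then Pos (map ((!) hh) [u..<v]) else if v < u then Neg (map ((!) hh) [v..<u]) else Eps)"

lemma up_iter:
  fixes a :: "nat \<Rightarrow> 'b::finite"
  assumes step: "\<And>n. a (Suc n) = g (a n)"
  shows "ultimately_periodic a"
proof -
  have "\<not> inj_on a {0 .. card (UNIV :: 'b set)}"
  proof
    assume "inj_on a {0 .. card (UNIV :: 'b set)}"
    then have "card {0 .. card (UNIV :: 'b set)} \<le> card (UNIV :: 'b set)"
      by (rule card_inj_on_le) auto
    then show False by simp
  qed
  then obtain m n where mn: "m \<noteq> n" "a m = a n" unfolding inj_on_def by blast
  then obtain m n where mn: "m < n" "a m = a n"
    by (metis linorder_neqE_nat)
  have "a (t + (n - m)) = a t" if "m \<le> t" for t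
    using that
  proof (induction t rule: dec_induct)
    case base then show ?case using mn by simp
  next
    case (step t)
    then show ?case using assms by (metis add_Suc)
  qed
  then show ?thesis unfolding ultimately_periodic_def using mn by (intro exI[of _ "n - m"]) auto
qed

lemma up_comp:
  assumes "ultimately_periodic a" and "\<And>k. f (Suc k) = G (a k)"
  shows "ultimately_periodic f"
proof -
  from assms(1) obtain p N where p: "p > 0" "\<And>n. n \<ge> N \<Longrightarrow> a (n + p) = a n"
    unfolding ultimately_periodic_def by blast
  have "f (n + p) = f n" if "n \<ge> Suc N" for n
  proof -
    define m where "m = n - 1"
    have m: "n = Suc m" "m \<ge> N" using that unfolding m_def by auto
    have "f (n + p) = G (a (m + p))" using assms(2)[of "m + p"] m by simp
    also have "\<dots> = G (a m)" using p m by simp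
    also have "\<dots> = f n" using assms(2)[of m] m by simp
    finally show ?thesis .
  qed
  then show ?thesis unfolding ultimately_periodic_def using p by blast
qed

context runs
begin

definition "GL x = LS (hom h (h x)) (length (hom h (take (eps x) (h x))) + lam (h x ! eps x) + 1)
    (length (hom h (take (Suc (lam x)) (h x))))"
definition "GR y = LS (hom h (h y)) (length (hom h (take (mu y) (h y))))
    (length (hom h (take (eps' y) (h y))) + mu (h y ! eps' y))"

lemma len_hom_take: "length (hom h (take s xs)) \<le> length (hom h xs)"
proof -
  have "xs = take s xs @ drop s xs" by simp
  then have "length (hom h xs) = length (hom h (take s xs)) + length (hom h (drop s xs))"
    by (metis hom_append length_append)
  then show ?thesis by simp
qed

lemma len_hom_take_Suc: "e < length xs \<Longrightarrow> length (hom h (take e xs)) + length (h (xs ! e)) \<le> length (hom h xs)"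
  using len_hom_take[of "Suc e" xs] by (simp add: take_Suc_conv_app_nth)

lemma left_rep: "\<exists>a. (\<forall>k. a (Suc k) = h (a k) ! eps (a k)) \<and>
   (\<forall>k. left_stretch h w (i (Suc k)) (i (Suc (Suc k))) = GL (a k))"
proof -
  obtain q0 where q0: "lastE (i 0 + M) q0" using left_ex by blast
  define Q where "Q = rec_nat q0 (\<lambda>_ q. hp q + eps (w q))"
  have QS: "Q (Suc k) = hp (Q k) + eps (w (Q k))" for k unfolding Q_def by simp
  have Ql: "lastE (i k + M) (Q k)" for k
  proof (induction k)
    case 0 then show ?case using q0 unfolding Q_def by simp
  next
    case (Suc k) then show ?case using left_b QS by simp
  qed
  have QE: "w (Q k) \<in> E" for k using Ql[of k] unfolding lastE_def by simp
  have astep: "w (Q (Suc k)) = h (w (Q k)) ! eps (w (Q k))" for k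
    using QS[of k] fp eps_prop[OF QE[of k]] by simp
  have rep: "left_stretch h w (i (Suc k)) (i (Suc (Suc k))) = GL (w (Q k))" for k
  proof -
    define P where "P = Q k"
    define x where "x = w P"
    define B where "B = hp (hp P)"
    define hh where "hh = hom h (h x)"
    define \<alpha> where "\<alpha> = length (hom h (take (eps x) (h x))) + lam (h x ! eps x) + 1"
    define \<beta> where "\<beta> = length (hom h (take (Suc (lam x)) (h x)))"
    have xE: "x \<in> E" unfolding x_def P_def using QE .
    have l: "lam x < length (h x)" using lam_prop[OF xE] by simp
    have e: "eps x < length (h x)" "h x ! eps x \<in> E" using eps_prop[OF xE] by auto
    have l2: "lam (h x ! eps x) < length (h (h x ! eps x))" using lam_prop[OF e(2)] by simp
    have I1: "i (Suc k) = hp P + Suc (lam x)" using left_a[OF Ql[of k]] unfolding P_def x_def by simp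
    have hI1: "hp (i (Suc k)) = B + \<beta>"
      unfolding I1 B_def \<beta>_def x_def using hp_in_block[of "Suc (lam x)" P] l x_def by simp
    have hQ: "hp (Q (Suc k)) = B + length (hom h (take (eps x) (h x)))"
      unfolding QS B_def x_def P_def[symmetric] using hp_in_block[of "eps x" P] e x_def by simp
    have I2: "i (Suc (Suc k)) = B + \<alpha>"
      using left_a[OF Ql[of "Suc k"]] hQ astep[of k] unfolding \<alpha>_def x_def P_def by simp
    have bl: "\<beta> \<le> length hh" unfolding \<beta>_def hh_def by (rule len_hom_take)
    have al: "\<alpha> \<le> length hh" unfolding \<alpha>_def hh_def
      using len_hom_take_Suc[OF e(1)] l2 by linarith
    have m1: "map w [B + \<alpha>..<B + \<beta>] = map ((!) hh) [\<alpha>..<\<beta>]"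
      unfolding B_def hh_def x_def using map_block2[of \<beta> P \<alpha>] bl hh_def x_def by simp
    have m2: "map w [B + \<beta>..<B + \<alpha>] = map ((!) hh) [\<beta>..<\<alpha>]"
      unfolding B_def hh_def x_def using map_block2[of \<alpha> P \<beta>] al hh_def x_def by simp
    show ?thesis
      unfolding left_stretch_def Let_def hI1 I2 GL_def LS_def
      using m1 m2 unfolding \<alpha>_def[symmetric] \<beta>_def[symmetric] hh_def[symmetric] x_def[symmetric] P_def[symmetric]
      by auto
  qed
  show ?thesis by (rule exI[of _ "\<lambda>k. w (Q k)"]) (use astep rep in simp)
qed

lemma right_rep: "\<exists>b. (\<forall>k. b (Suc k) = h (b k) ! eps' (b k)) \<and>
   (\<forall>k. right_stretch h w (j (Suc k)) (j (Suc (Suc k))) = GR (b k))"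
proof -
  obtain q0 where q0: "firstE (j 0 - M + 1) q0" using right_ex by blast
  define Q where "Q = rec_nat q0 (\<lambda>_ q. hp q + eps' (w q))"
  have QS: "Q (Suc k) = hp (Q k) + eps' (w (Q k))" for k unfolding Q_def by simp
  have Ql: "firstE (j k - M + 1) (Q k)" for k
  proof (induction k)
    case 0 then show ?case using q0 unfolding Q_def by simp
  next
    case (Suc k) then show ?case using right_b QS by simp
  qed
  have QE: "w (Q k) \<in> E" for k using Ql[of k] unfolding firstE_def by simp
  have astep: "w (Q (Suc k)) = h (w (Q k)) ! eps' (w (Q k))" for k
    using QS[of k] fp eps'_prop[OF QE[of k]] by simp
  have rep: "right_stretch h w (j (Suc k)) (j (Suc (Suc k))) = GR (w (Q k))" for k
  proof -
    define P where "P = Q k"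
    define x where "x = w P"
    define B where "B = hp (hp P)"
    define hh where "hh = hom h (h x)"
    define \<alpha> where "\<alpha> = length (hom h (take (eps' x) (h x))) + mu (h x ! eps' x)"
    define \<beta> where "\<beta> = length (hom h (take (mu x) (h x)))"
    have xE: "x \<in> E" unfolding x_def P_def using QE .
    have l: "mu x < length (h x)" using mu_prop[OF xE] by simp
    have e: "eps' x < length (h x)" "h x ! eps' x \<in> E" using eps'_prop[OF xE] by auto
    have l2: "mu (h x ! eps' x) < length (h (h x ! eps' x))" using mu_prop[OF e(2)] by simp
    have I1: "Suc (j (Suc k)) = hp P + mu x" using right_a[OF Ql[of k]] unfolding P_def x_def by simp
    have hI1: "hp (Suc (j (Suc k))) = B + \<beta>"
      unfolding I1 B_def \<beta>_def x_def using hp_in_block[of "mu x" P] l x_def by simp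
    have hQ: "hp (Q (Suc k)) = B + length (hom h (take (eps' x) (h x)))"
      unfolding QS B_def x_def P_def[symmetric] using hp_in_block[of "eps' x" P] e x_def by simp
    have I2: "Suc (j (Suc (Suc k))) = B + \<alpha>"
      using right_a[OF Ql[of "Suc k"]] hQ astep[of k] unfolding \<alpha>_def x_def P_def by simp
    have bl: "\<beta> \<le> length hh" unfolding \<beta>_def hh_def by (rule len_hom_take)
    have al: "\<alpha> \<le> length hh" unfolding \<alpha>_def hh_def
      using len_hom_take_Suc[OF e(1)] l2 by linarith
    have m1: "map w [B + \<alpha>..<B + \<beta>] = map ((!) hh) [\<alpha>..<\<beta>]"
      unfolding B_def hh_def x_def using map_block2[of \<beta> P \<alpha>] bl hh_def x_def by simp
    have m2: "map w [B + \<beta>..<B + \<alpha>] = map ((!) hh) [\<beta>..<\<alpha>]"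
      unfolding B_def hh_def x_def using map_block2[of \<alpha> P \<beta>] al hh_def x_def by simp
    have pos: "hp (Suc (j (Suc k))) \<ge> 1" using hp_ge[of "Suc (j (Suc k))"] by simp
    have n: "Suc (hp (Suc (j (Suc k))) - 1) = B + \<beta>" using pos hI1 by simp
    have c1: "(j (Suc (Suc k)) > hp (Suc (j (Suc k))) - 1) = (\<beta> < \<alpha>)" using n I2 by linarith
    have c2: "(j (Suc (Suc k)) < hp (Suc (j (Suc k))) - 1) = (\<alpha> < \<beta>)" using n I2 by linarith
    show ?thesis
      unfolding right_stretch_def Let_def c1 c2 n I2 GR_def LS_def
      using m1 m2 unfolding \<alpha>_def[symmetric] \<beta>_def[symmetric] hh_def[symmetric] x_def[symmetric] P_def[symmetric]
      by auto
  qed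
  show ?thesis by (rule exI[of _ "\<lambda>k. w (Q k)"]) (use astep rep in simp)
qed

end



theorem lemma14:
  fixes h :: "'a::finite \<Rightarrow> 'a list" and w0 :: 'a and D :: "'a set"
    and i j :: "nat \<Rightarrow> nat"
  assumes "nonerasing h"
    and "prolongable h w0"
    and "\<not> ultimately_periodic (omega_word h w0)"
    and "\<forall>a. \<forall>n\<ge>1. set ((hom h ^^ n) [a]) = set (h a)"
    and "D \<noteq> {}" and "D \<noteq> UNIV"
    and "delta_sequence h (omega_word h w0) D i j"
  shows "ultimately_periodic (\<lambda>k. left_stretch h (omega_word h w0) (i k) (i (Suc k)))
     \<and> ultimately_periodic (\<lambda>k. right_stretch h (omega_word h w0) (j k) (j (Suc k)))"
proof -
  let ?w = "omega_word h w0"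
  let ?M = "max_len h"
  have al: "set (hom h (h a)) = set (h a)" for a
  proof -
    have "set ((hom h ^^ 2) [a]) = set (h a)" using assms(4) by simp
    then show ?thesis by (simp add: numeral_2_eq_2)
  qed
  have Mb: "length (h a) \<le> ?M" for a
    unfolding max_len_def by (rule Max_ge) auto
  have ds: "\<forall>k. max_block D ?w (i k) (j k) \<and> i k > ?M \<and> j k - i k + 1 > ?M^2
       \<and> occ_le (hpos h ?w (i k + ?M), hpos h ?w (j k - ?M + 1) - 1) (i (Suc k), j (Suc k))
       \<and> occ_le (i (Suc k), j (Suc k)) (hpos h ?w (i k - ?M + 1), hpos h ?w (j k + ?M) - 1)"
    using assms(7) unfolding delta_sequence_def Let_def by simp
  interpret R: runs h ?w D ?M i j
  proof (unfold_locales)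
    show "\<And>a. h a \<noteq> []" using assms(1) unfolding nonerasing_def by blast
    show "\<And>p t. t < length (h (?w p)) \<Longrightarrow> ?w (hpos h ?w p + t) = h (?w p) ! t"
      using fixpoint[OF assms(1,2)] by blast
    show "\<And>a. length (h a) \<le> ?M" by (rule Mb)
    show "\<And>a. set (hom h (h a)) = set (h a)" by (rule al)
    show "\<And>k. max_block D ?w (i k) (j k)" using ds by blast
    show "\<And>k. ?M < i k" using ds by blast
    show "\<And>k. ?M * ?M < j k - i k + 1" using ds by (simp add: power2_eq_square)
    show "\<And>k. i (Suc k) \<le> hpos h ?w (i k + ?M)" using ds by (simp add: occ_le_def)
    show "\<And>k. hpos h ?w (j k - ?M + 1) - 1 \<le> j (Suc k)" using ds by (simp add: occ_le_def)
  qed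
  obtain a where a: "\<And>k. a (Suc k) = h (a k) ! R.eps (a k)"
    "\<And>k. left_stretch h ?w (i (Suc k)) (i (Suc (Suc k))) = R.GL (a k)"
    using R.left_rep by blast
  obtain b where b: "\<And>k. b (Suc k) = h (b k) ! R.eps' (b k)"
    "\<And>k. right_stretch h ?w (j (Suc k)) (j (Suc (Suc k))) = R.GR (b k)"
    using R.right_rep by blast
  have "ultimately_periodic a" by (rule up_iter[where g="\<lambda>x. h x ! R.eps x"]) (rule a(1))
  then have L: "ultimately_periodic (\<lambda>k. left_stretch h ?w (i k) (i (Suc k)))"
    by (rule up_comp) (use a(2) in simp)
  have "ultimately_periodic b" by (rule up_iter[where g="\<lambda>x. h x ! R.eps' x"]) (rule b(1))
  then have Rr: "ultimately_periodic (\<lambda>k. right_stretch h ?w (j k) (j (Suc k)))"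
    by (rule up_comp) (use b(2) in simp)
  show ?thesis using L Rr by blast
qed


end
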